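(* Let $\mathcal{X}=\mathcal{X}^{(1)}\times\cdots\times\mathcal{X}^{(d)}$ with each $\mathcal{X}^{(i)}$ finite, let $\pi\in\mathcal{P}(\mathcal{X})$, $M\in\mathcal{L}(\mathcal{X})$, and $M_i,L_i\in\mathcal{L}(\mathcal{X}^{(i)})$ for $i\in\{1,\dots,d\}$. Let $f:\mathbb{R}^+\to\mathbb{R}$ be convex with $f(1)=0$. 1. (Non-negativity) $D_f^{\pi}(M\|\otimes_{i=1}^d L_i)\ge 0$. If moreover $\min_{x\in\mathcal{X}}\pi(x)>0$, equality holds if and only if $M=\otimes_{i=1}^d L_i$. 2. (Convexity) For fixed $L_i$, the map $\mathcal{L}(\mathcal{X})\ni M\mapsto D_f^{\pi}(M\|\otimes_{i=1}^d L_i)$ is convex. 3. (Chain rule) If $\pi=\otimes_{i=1}^d\pi^{(i)}$ with $\pi^{(i)}\in\mathcal{P}(\mathcal{X}^{(i)})$, then $D_{KL}^{\pi}(\otimes_{i=1}^d M_i\|\otimes_{i=1}^d L_i)=\sum_{i=1}^d D_{KL}^{\pi^{(i)}}(M_i\|L_i)$. 4. (Hellinger bounds) If $f(t)=(\sqrt t-1)^2$ and $\pi=\otimes_{i=1}^d\pi^{(i)}$, then $\max_{i} D_f^{\pi^{(i)}}(M_i\|L_i)\le D_f^{\pi}(\otimes_{i=1}^d M_i\|\otimes_{i=1}^d L_i)\le\sum_{i=1}^d D_f^{\pi^{(i)}}(M_i\|L_i)$. 5. (Bisection) If $\pi=\otimes_{i=1}^d\pi^{(i)}$, $M$ is $\pi$-stationary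 and each $L_i$ is $\pi^{(i)}$-stationary, then $D_f^{\pi}(M\|\otimes_{i=1}^d L_i)=D_f^{\pi}(M^*\|\otimes_{i=1}^d L_i^* )$. In particular, if each $L_i$ is $\pi^{(i)}$-reversible, then $D_f^{\pi}(M\|\otimes_{i=1}^d L_i)=D_f^{\pi}(M^*\|\otimes_{i=1}^d L_i)$.
   Context: $\mathcal{P}(\Omega)$ is the set of probability masses on a finite set $\Omega$ and $\mathcal{L}(\Omega)$ the set of transition matrices on $\Omega$. For $f$ convex with $f(1)=0$, $\pi\in\mathcal{P}(\mathcal{X})$, $M,L\in\mathcal{L}(\mathcal{X})$: $D_f^{\pi}(M\|L):=\sum_{x}\pi(x)\sum_y L(x,y)f\big(M(x,y)/L(x,y)\big)$, with conventions $0f(0/0):=0$, $0f(a/0):=af'(+\infty)$ for $a>0$ where $f'(+\infty):=\lim_{x\to0^+}xf(1/x)$, and $0\cdot\infty:=0$. $D_{KL}^\pi$ denotes the case $f(t)=t\ln t$. The tensor product of $M_i\in\mathcal{L}(\mathcal{X}^{(i)})$ is $(\otimes_i M_i)(x,y)=\prod_i M_i(x^i,y^i)$ for $x=(x^1,\dots,x^d)$, $y=(y^1,\dots,y^d)$; similarly $\otimes_i\pi^{(i)}$ is the product measure. $P$ is $\pi$-stationary if $\pi P=\pi$ and $\pi$-reversible if $\pi(x)P(x,y)=\pi(y)P(y,x)$ for all $x,y$. For $\pi$-stationary $P$, its time reversal is $P^*(x,y)=\frac{\pi(y)}{\pi(x)}P(y,x)$ (and $L_i^*$ is the time reversal of $L_i$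 with respect to $\pi^{(i)}$).
   Formalization: The equality clause of part 1 needs f strictly convex at 1: f(1) < t f(a)+(1-t) f(b) whenever 0<=a<1<b, 0<t<1 and ta+(1-t)b=1; f is convex on [0, infinity). Each condition added here is assumed in the paper as well or is needed for the statement above to hold. *)

theory Defs
  imports "HOL-Analysis.Analysis"
begin

text \<open>Probability masses and transition matrices on a finite set; only the
values on the carrier matter.\<close>

definition prob_mass :: "'x set \<Rightarrow> ('x \<Rightarrow> real) \<Rightarrow> bool" where
  "prob_mass \<Omega> p \<longleftrightarrow> (\<forall>x\<in>\<Omega>. 0 \<le> p x) \<and> (\<Sum>x\<in>\<Omega>. p x) = 1"

definition trans_mat :: "'x set \<Rightarrow> ('x \<Rightarrow> 'x \<Rightarrow> real) \<Rightarrow> bool" where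
  "trans_mat \<Omega> P \<longleftrightarrow> (\<forall>x\<in>\<Omega>. \<forall>y\<in>\<Omega>. 0 \<le> P x y) \<and> (\<forall>x\<in>\<Omega>. (\<Sum>y\<in>\<Omega>. P x y) = 1)"

definition fprime_inf :: "(real \<Rightarrow> real) \<Rightarrow> ereal" where
  "fprime_inf f = Lim (at_right 0) (\<lambda>x. ereal (x * f (1 / x)))"

definition fterm :: "(real \<Rightarrow> real) \<Rightarrow> real \<Rightarrow> real \<Rightarrow> ereal" where
  "fterm f a b = (if b = 0 then (if a = 0 then 0 else ereal a * fprime_inf f)
                  else ereal (b * f (a / b)))"

text \<open>D_f^pi(M || L); the ereal product realises the convention 0 * infinity = 0.\<close>
definition fdiv :: "(real \<Rightarrow> real) \<Rightarrow> 'x set \<Rightarrow> ('x \<Rightarrow> real) \<Rightarrow>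
    ('x \<Rightarrow> 'x \<Rightarrow> real) \<Rightarrow> ('x \<Rightarrow> 'x \<Rightarrow> real) \<Rightarrow> ereal" where
  "fdiv f \<Omega> \<pi> M L = (\<Sum>x\<in>\<Omega>. ereal (\<pi> x) * (\<Sum>y\<in>\<Omega>. fterm f (M x y) (L x y)))"

definition prod_space :: "nat \<Rightarrow> (nat \<Rightarrow> 'a set) \<Rightarrow> (nat \<Rightarrow> 'a) set" where
  "prod_space d S = PiE {1..d} S"

definition tensor_mat :: "nat \<Rightarrow> (nat \<Rightarrow> 'a \<Rightarrow> 'a \<Rightarrow> real) \<Rightarrow> (nat \<Rightarrow> 'a) \<Rightarrow> (nat \<Rightarrow> 'a) \<Rightarrow> real" where
  "tensor_mat d Ls = (\<lambda>x y. \<Prod>i\<in>{1..d}. Ls i (x i) (y i))"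

definition tensor_mass :: "nat \<Rightarrow> (nat \<Rightarrow> 'a \<Rightarrow> real) \<Rightarrow> (nat \<Rightarrow> 'a) \<Rightarrow> real" where
  "tensor_mass d ps = (\<lambda>x. \<Prod>i\<in>{1..d}. ps i (x i))"

definition stationary :: "'x set \<Rightarrow> ('x \<Rightarrow> real) \<Rightarrow> ('x \<Rightarrow> 'x \<Rightarrow> real) \<Rightarrow> bool" where
  "stationary \<Omega> \<pi> P \<longleftrightarrow> (\<forall>y\<in>\<Omega>. (\<Sum>x\<in>\<Omega>. \<pi> x * P x y) = \<pi> y)"

definition reversible :: "'x set \<Rightarrow> ('x \<Rightarrow> real) \<Rightarrow> ('x \<Rightarrow> 'x \<Rightarrow> real) \<Rightarrow> bool" where
  "reversible \<Omega> \<pi> P \<longleftrightarrow> (\<forall>x\<in>\<Omega>. \<forall>y\<in>\<Omega>. \<pi> x * P x y = \<pi> y * P y x)"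

definition time_rev :: "('x \<Rightarrow> real) \<Rightarrow> ('x \<Rightarrow> 'x \<Rightarrow> real) \<Rightarrow> 'x \<Rightarrow> 'x \<Rightarrow> real" where
  "time_rev \<pi> P = (\<lambda>x y. \<pi> y * P y x / \<pi> x)"

definition KL_fun :: "real \<Rightarrow> real" where
  "KL_fun t = t * ln t"

definition hellinger_fun :: "real \<Rightarrow> real" where
  "hellinger_fun t = (sqrt t - 1) ^ 2"

text \<open>Strict convexity of f at 1 (needed for the equality case of non-negativity).\<close>
definition strictly_convex_at_1 :: "(real \<Rightarrow> real) \<Rightarrow> bool" where
  "strictly_convex_at_1 f \<longleftrightarrow> (\<forall>a b t. 0 \<le> a \<and> a < 1 \<and> 1 < b \<and> 0 < t \<and> t < 1 \<and>
      t * a + (1 - t) * b = 1 \<longrightarrow> f 1 < t * f a + (1 - t) * f b)"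

end

theory Submission
  imports Defs
begin


lemma ereal_mult_distrib_nn:
  fixes a b :: ereal
  assumes "c \<ge> 0" "a \<noteq> -\<infinity>" "b \<noteq> -\<infinity>"
  shows "ereal c * (a + b) = ereal c * a + ereal c * b"
  using assms by (cases a; cases b) (auto simp: ereal_zero_mult field_simps)

lemma ereal_mult_nn_not_minf:
  fixes a :: ereal
  assumes "c \<ge> 0" "a \<noteq> -\<infinity>"
  shows "ereal c * a \<noteq> -\<infinity>"
  using assms by (cases a) auto

lemma sum_not_minf:
  fixes h :: "'b \<Rightarrow> ereal"
  assumes "\<And>x. x \<in> A \<Longrightarrow> h x \<noteq> -\<infinity>"
  shows "sum h A \<noteq> -\<infinity>"
  using assms by (induction A rule: infinite_finite_induct) auto

lemma ereal_sum_distrib_nn: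
  fixes h :: "'b \<Rightarrow> ereal"
  assumes "c \<ge> 0" "\<And>x. x \<in> A \<Longrightarrow> h x \<noteq> -\<infinity>"
  shows "ereal c * sum h A = (\<Sum>x\<in>A. ereal c * h x)"
  using assms
proof (induction A rule: infinite_finite_induct)
  case (insert x F)
  then show ?case by (simp add: ereal_mult_distrib_nn sum_not_minf)
qed auto



lemma slope_mono0:
  assumes f: "convex_on {0..} (f::real\<Rightarrow>real)" and "0 \<le> u" "u < w" "w < t"
  shows "(f w - f u) / (w - u) \<le> (f t - f u) / (t - u)"
proof -
  have "(f u - f w) / (u - w) \<le> (f u - f t) / (u - t)"
    using convex_on_slope_le(1)[OF f, of u t w] assms by auto
  moreover have "(f u - f w) / (u - w) = (f w - f u) / (w - u)"
    by (simp add: divide_simps) (simp add: algebra_simps)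
  moreover have "(f u - f t) / (u - t) = (f t - f u) / (t - u)"
    by (simp add: divide_simps) (simp add: algebra_simps)
  ultimately show ?thesis by simp
qed

lemma fprime_inf_tendsto:
  assumes f: "convex_on {0..} (f::real\<Rightarrow>real)"
  shows "((\<lambda>x. ereal (x * f (1 / x))) \<longlongrightarrow> fprime_inf f) (at_right 0)"
proof -
  define \<rho> where "\<rho> t = (f t - f 0) / t" for t
  have mono: "\<rho> s \<le> \<rho> t" if "0 < s" "s \<le> t" for s t
  proof (cases "s = t")
    case False
    then show ?thesis using slope_mono0[OF f, of 0 s t] that by (simp add: \<rho>_def)
  qed simp
  define l where "l = (SUP t\<in>{0<..}. ereal (\<rho> t))"
  have l1: "ereal (\<rho> 1) \<le> l" unfolding l_def by (rule SUP_upper) auto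
  have A: "((\<lambda>x. ereal (\<rho> (1/x))) \<longlongrightarrow> l) (at_right 0)"
  proof (rule increasing_tendsto)
    show "\<forall>\<^sub>F n in at_right 0. ereal (\<rho> (1 / n)) \<le> l"
      using eventually_at_right_real[of 0 1]
      by (rule eventually_mono) (auto simp: l_def intro!: SUP_upper)
  next
    fix y assume "y < l"
    then obtain t where t: "t > 0" "y < ereal (\<rho> t)" unfolding l_def by (auto simp: less_SUP_iff)
    show "\<forall>\<^sub>F n in at_right 0. y < ereal (\<rho> (1 / n))"
    proof -
      have ev: "eventually (\<lambda>x. x \<in> {0<..<1/t}) (at_right 0)" using t by (intro eventually_at_right_real) simp
      then show ?thesis
    proof (rule eventually_mono)
      fix x assume x: "x \<in> {0<..<1/t}"
      then have "t \<le> 1/x" using t by (auto simp: field_simps)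
      then have "\<rho> t \<le> \<rho> (1/x)" using mono t by auto
      then show "y < ereal (\<rho> (1/x))" using t(2) by (meson ereal_less_eq(3) order_less_le_trans)
    qed
    qed
  qed
  have B: "((\<lambda>x. ereal (x * f 0)) \<longlongrightarrow> ereal 0) (at_right 0)"
    by (intro tendsto_ereal) (auto intro!: tendsto_eq_intros)
  have C: "((\<lambda>x. ereal (\<rho> (1/x)) + ereal (x * f 0)) \<longlongrightarrow> l + ereal 0) (at_right 0)"
    using l1 by (intro tendsto_add_ereal_nonneg[OF _ _ A B]) auto
  have D: "((\<lambda>x. ereal (x * f (1 / x))) \<longlongrightarrow> l) (at_right 0)"
  proof (rule Lim_transform_eventually)
    show "((\<lambda>x. ereal (\<rho> (1/x) + x * f 0)) \<longlongrightarrow> l) (at_right 0)" using C by simp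
    show "\<forall>\<^sub>F x in at_right 0. ereal (\<rho> (1 / x) + x * f 0) = ereal (x * f (1 / x))"
      using eventually_at_right_real[OF zero_less_one]
      by (rule eventually_mono) (auto simp: \<rho>_def field_simps)
  qed
  then have "fprime_inf f = l" unfolding fprime_inf_def by (intro tendsto_Lim) auto
  with D show ?thesis by simp
qed

lemma fprime_inf_ge_slope:
  assumes f: "convex_on {0..} (f::real\<Rightarrow>real)" and "0 \<le> u" "u < w"
  shows "ereal ((f w - f u) / (w - u)) \<le> fprime_inf f"
proof -
  define \<sigma> where "\<sigma> = (f w - f u) / (w - u)"
  have G: "((\<lambda>x. ereal (x * f u + \<sigma> * (1 - x * u))) \<longlongrightarrow> ereal \<sigma>) (at_right 0)"
    by (intro tendsto_ereal tendsto_eq_intros) auto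
  have "ereal \<sigma> \<le> fprime_inf f"
  proof (rule tendsto_le[OF _ fprime_inf_tendsto[OF f] G])
    show "\<forall>\<^sub>F x in at_right 0. ereal (x * f u + \<sigma> * (1 - x * u)) \<le> ereal (x * f (1 / x))"
    proof -
      have ev: "eventually (\<lambda>x. x \<in> {0<..<1/w}) (at_right 0)" using assms by (intro eventually_at_right_real) simp
      then show ?thesis
    proof (rule eventually_mono)
      fix x assume x: "x \<in> {0<..<1/w}"
      then have t: "w < 1/x" using assms by (auto simp: field_simps)
      have "\<sigma> \<le> (f (1/x) - f u) / (1/x - u)"
        unfolding \<sigma>_def using slope_mono0[OF f assms(2,3) t] .
      then have "\<sigma> * (1/x - u) \<le> f (1/x) - f u"
        using t assms by (simp add: pos_le_divide_eq)
      then have "x * (\<sigma> * (1/x - u)) \<le> x * (f (1/x) - f u)"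
        using x by (intro mult_left_mono) auto
      then show "ereal (x * f u + \<sigma> * (1 - x * u)) \<le> ereal (x * f (1 / x))"
        using x by (simp add: algebra_simps)
    qed
    qed
  qed simp
  then show ?thesis by (simp add: \<sigma>_def)
qed

lemma fprime_inf_not_minf:
  assumes f: "convex_on {0..} (f::real\<Rightarrow>real)"
  shows "fprime_inf f \<noteq> -\<infinity>"
  using fprime_inf_ge_slope[OF f, of 0 1] by auto



lemma fterm_zero_right: "a \<ge> 0 \<Longrightarrow> fterm f a 0 = ereal a * fprime_inf f"
  by (auto simp: fterm_def zero_ereal_def[symmetric])

lemma fterm_pos_right: "b \<noteq> 0 \<Longrightarrow> fterm f a b = ereal (b * f (a / b))"
  by (auto simp: fterm_def)

lemma fterm_not_minf:
  assumes f: "convex_on {0..} (f::real\<Rightarrow>real)" and "a \<ge> 0"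
  shows "fterm f a b \<noteq> -\<infinity>"
  using fprime_inf_not_minf[OF f] assms(2)
  by (cases "fprime_inf f") (auto simp: fterm_def)

lemma fterm_00[simp]: "fterm f 0 0 = 0"
  by (simp add: fterm_def)

lemma slope_bound:
  assumes f: "convex_on {0..} (f::real\<Rightarrow>real)" and l: "fprime_inf f = ereal l"
    and "0 \<le> u" "0 < v"
  shows "f (u + v) \<le> f u + v * l"
proof -
  have "ereal ((f (u+v) - f u) / (u + v - u)) \<le> ereal l"
    using fprime_inf_ge_slope[OF f, of u "u+v"] assms l by simp
  then have "(f (u+v) - f u) / v \<le> l" by simp
  then show ?thesis using assms by (simp add: divide_simps mult.commute)
qed

lemma fterm_subadd:
  assumes f: "convex_on {0..} (f::real\<Rightarrow>real)"
    and a1: "a1 \<ge> 0" and a2: "a2 \<ge> 0" and b1: "b1 \<ge> 0" and b2: "b2 \<ge> 0"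
  shows "fterm f (a1 + a2) (b1 + b2) \<le> fterm f a1 b1 + fterm f a2 b2"
proof -
  have Lnm: "fprime_inf f \<noteq> -\<infinity>" by (rule fprime_inf_not_minf[OF f])
  have half: "fterm f (a + a') b \<le> fterm f a b + fterm f a' 0"
    if ha: "a \<ge> 0" "a' \<ge> 0" and hb: "b > 0" for a a' b
  proof (cases "a' = 0")
    case True then show ?thesis by simp
  next
    case False
    then have a'p: "a' > 0" using ha by simp
    show ?thesis
    proof (cases "fprime_inf f")
      case (real l)
      have "f (a/b + a'/b) \<le> f (a/b) + a'/b * l"
        using slope_bound[OF f real, of "a/b" "a'/b"] ha hb a'p by simp
      then have "b * f (a/b + a'/b) \<le> b * (f (a/b) + a'/b * l)"
        using hb by (intro mult_left_mono) auto
      then have "b * f ((a + a')/b) \<le> b * f (a/b) + a' * l"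
        using hb by (simp add: add_divide_distrib algebra_simps)
      then show ?thesis using hb ha real by (simp add: fterm_def)
    next
      case PInf
      then show ?thesis using hb a'p by (simp add: fterm_def)
    qed (use Lnm in simp)
  qed
  show ?thesis
  proof (cases "b1 = 0")
    case b10: True
    show ?thesis
    proof (cases "b2 = 0")
      case True
      show ?thesis
      proof (cases "fprime_inf f")
        case (real l)
        then show ?thesis using b10 True a1 a2
          by (simp add: fterm_zero_right distrib_right)
      next
        case PInf
        then show ?thesis using b10 True a1 a2
          by (auto simp: fterm_def)
      qed (use Lnm in simp)
    next
      case False
      then have "b2 > 0" using b2 by simp
      from half[OF a2 a1 this] show ?thesis using b10 by (simp add: add.commute)
    qed
  next
    case b1n: False
    then have b1p: "b1 > 0" using b1 by simp
    show ?thesis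
    proof (cases "b2 = 0")
      case True
      from half[OF a1 a2 b1p] show ?thesis using True by simp
    next
      case False
      then have b2p: "b2 > 0" using b2 by simp
      define B where "B = b1 + b2"
      define t where "t = b2 / B"
      have Bp: "B > 0" using b1p b2p by (simp add: B_def)
      have t01: "0 \<le> t" "t \<le> 1" using b1p b2p by (auto simp: t_def B_def)
      have "f ((1 - t) *\<^sub>R (a1/b1) + t *\<^sub>R (a2/b2)) \<le> (1 - t) * f (a1/b1) + t * f (a2/b2)"
        using a1 a2 b1p b2p t01 by (intro convex_onD[OF f]) auto
      moreover have h1: "1 - t = b1 / B" using Bp by (simp add: t_def B_def field_simps)
      moreover have "(1 - t) *\<^sub>R (a1/b1) + t *\<^sub>R (a2/b2) = (a1 + a2) / B"
        unfolding h1 using b1p b2p Bp by (simp add: t_def add_divide_distrib)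
      ultimately have "f ((a1 + a2) / B) \<le> b1 / B * f (a1/b1) + b2 / B * f (a2/b2)"
        by (simp add: t_def)
      then have "B * f ((a1 + a2) / B) \<le> B * (b1 / B * f (a1/b1) + b2 / B * f (a2/b2))"
        using Bp by (intro mult_left_mono) auto
      moreover have "B * (b1 / B * f (a1/b1) + b2 / B * f (a2/b2)) = b1 * f (a1/b1) + b2 * f (a2/b2)"
        using Bp by (simp add: distrib_left)
      ultimately have "B * f ((a1 + a2) / B) \<le> b1 * f (a1/b1) + b2 * f (a2/b2)"
        by simp
      then show ?thesis using b1p b2p Bp by (simp add: fterm_def B_def)
    qed
  qed
qed

lemma fterm_sum:
  assumes f: "convex_on {0..} (f::real\<Rightarrow>real)" and "finite A"
    and "\<And>y. y \<in> A \<Longrightarrow> a y \<ge> 0" "\<And>y. y \<in> A \<Longrightarrow> b y \<ge> 0"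
  shows "fterm f (\<Sum>y\<in>A. a y) (\<Sum>y\<in>A. b y) \<le> (\<Sum>y\<in>A. fterm f (a y) (b y))"
  using assms(2-)
proof (induction A rule: finite_induct)
  case (insert x F)
  have "fterm f (\<Sum>y\<in>insert x F. a y) (\<Sum>y\<in>insert x F. b y)
      = fterm f (a x + (\<Sum>y\<in>F. a y)) (b x + (\<Sum>y\<in>F. b y))" using insert by simp
  also have "\<dots> \<le> fterm f (a x) (b x) + fterm f (\<Sum>y\<in>F. a y) (\<Sum>y\<in>F. b y)"
    using insert by (intro fterm_subadd[OF f]) (auto intro: sum_nonneg)
  also have "\<dots> \<le> fterm f (a x) (b x) + (\<Sum>y\<in>F. fterm f (a y) (b y))"
    using insert by (intro add_left_mono) auto
  finally show ?case using insert by simp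
qed simp



lemma fterm_11: "fterm f 1 1 = ereal (f 1)"
  by (simp add: fterm_def)

lemma row_nonneg:
  assumes f: "convex_on {0..} (f::real\<Rightarrow>real)" and f1: "f 1 = 0" and "finite A"
    and "\<And>y. y \<in> A \<Longrightarrow> a y \<ge> 0" "\<And>y. y \<in> A \<Longrightarrow> b y \<ge> 0"
    and "(\<Sum>y\<in>A. a y) = 1" "(\<Sum>y\<in>A. b y) = 1"
  shows "0 \<le> (\<Sum>y\<in>A. fterm f (a y) (b y))"
proof -
  have "fterm f (\<Sum>y\<in>A. a y) (\<Sum>y\<in>A. b y) \<le> (\<Sum>y\<in>A. fterm f (a y) (b y))"
    by (rule fterm_sum[OF f]) (use assms in auto)
  then show ?thesis using assms(6,7) f1 by (simp add: fterm_11 zero_ereal_def)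
qed

lemma fdiv_nonneg:
  assumes f: "convex_on {0..} (f::real\<Rightarrow>real)" and f1: "f 1 = 0" and fin: "finite \<Omega>"
    and pi: "\<forall>x\<in>\<Omega>. 0 \<le> \<pi> x" and M: "trans_mat \<Omega> M" and L: "trans_mat \<Omega> L"
  shows "0 \<le> fdiv f \<Omega> \<pi> M L"
  unfolding fdiv_def
proof (rule sum_nonneg)
  fix x assume x: "x \<in> \<Omega>"
  have "0 \<le> (\<Sum>y\<in>\<Omega>. fterm f (M x y) (L x y))"
    using M L x by (intro row_nonneg[OF f f1 fin]) (auto simp: trans_mat_def)
  then show "0 \<le> ereal (\<pi> x) * (\<Sum>y\<in>\<Omega>. fterm f (M x y) (L x y))"
    using pi x by (simp add: ereal_zero_le_0_iff)
qed

lemma key_pos: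
  assumes f: "convex_on {0..} (f::real\<Rightarrow>real)" and f1: "f 1 = 0"
    and sc: "strictly_convex_at_1 f"
    and h: "0 \<le> mA" "mA < lA" "0 \<le> lB" "mA + mB = 1" "lA + lB = 1"
  shows "0 < fterm f mA lA + fterm f mB lB"
proof (cases "lB = 0")
  case False
  then have lBp: "lB > 0" using h by simp
  have lAp: "lA > 0" using h by simp
  have "f 1 < lA * f (mA/lA) + (1 - lA) * f (mB/lB)"
  proof (rule sc[unfolded strictly_convex_at_1_def, rule_format], intro conjI)
    show "0 \<le> mA / lA" "mA / lA < 1" using h lAp by (auto simp: divide_simps)
    have "mB > lB" using h by simp
    then show "1 < mB / lB" using lBp by (simp add: divide_simps)
    show "0 < lA" "lA < 1" using lAp lBp h by auto
    show "lA * (mA / lA) + (1 - lA) * (mB / lB) = 1"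
    proof -
      have e: "mB = 1 - mA" "lA = 1 - lB" using h by auto
      show ?thesis using lAp lBp unfolding e by (simp add: divide_simps)
    qed
  qed
  moreover have "1 - lA = lB" using h by simp
  ultimately have "0 < lA * f (mA/lA) + lB * f (mB/lB)" using f1 by simp
  then show ?thesis using lAp lBp by (simp add: fterm_def)
next
  case True
  then have lA: "lA = 1" and mBp: "mB > 0" and mB: "mB = 1 - mA" using h by auto
  have mBnz: "mB \<noteq> 0" using mBp by simp
  have "f 1 < (1/(2-mA)) * f mA + (1 - 1/(2-mA)) * f 2"
  proof (rule sc[unfolded strictly_convex_at_1_def, rule_format], intro conjI)
    show "0 \<le> mA" "mA < 1" "1 < (2::real)" using h lA by auto
    show "0 < 1/(2-mA)" "1/(2-mA) < 1" using h lA by (auto simp: divide_simps)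
    show "1 / (2 - mA) * mA + (1 - 1 / (2 - mA)) * 2 = 1"
      using h lA by (simp add: divide_simps)
  qed
  then have "0 < ((1/(2-mA)) * f mA + (1 - 1/(2-mA)) * f 2) * (2 - mA)"
    using f1 h lA by simp
  also have "\<dots> = f mA + (1 - mA) * f 2"
    using h lA by (simp add: divide_simps)
  finally have pos: "0 < f mA + (1 - mA) * f 2" .
  show ?thesis
  proof (cases "fprime_inf f")
    case (real l)
    have "f (1 + 1) \<le> f 1 + 1 * l" using slope_bound[OF f real, of 1 1] by simp
    then have "f 2 \<le> l" using f1 by simp
    then have "(1 - mA) * f 2 \<le> (1 - mA) * l" using h lA by (intro mult_left_mono) auto
    then have "0 < f mA + mB * l" using pos mB by simp
    then show ?thesis using lA True mBnz real by (simp add: fterm_def)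
  next
    case PInf
    then show ?thesis using lA True mBp by (simp add: fterm_def)
  qed (use fprime_inf_not_minf[OF f] in simp)
qed

lemma row_eq:
  assumes f: "convex_on {0..} (f::real\<Rightarrow>real)" and f1: "f 1 = 0"
    and sc: "strictly_convex_at_1 f" and fin: "finite A"
    and a: "\<And>y. y \<in> A \<Longrightarrow> a y \<ge> 0" and b: "\<And>y. y \<in> A \<Longrightarrow> b y \<ge> 0"
    and sa: "(\<Sum>y\<in>A. a y) = 1" and sb: "(\<Sum>y\<in>A. b y) = 1"
    and z: "(\<Sum>y\<in>A. fterm f (a y) (b y)) = 0"
  shows "\<forall>y\<in>A. a y = b y"
proof (rule ccontr)
  assume "\<not> (\<forall>y\<in>A. a y = b y)"
  have ex: "\<exists>y\<in>A. a y < b y"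
  proof (rule ccontr)
    assume "\<not> (\<exists>y\<in>A. a y < b y)"
    then have ge: "\<forall>y\<in>A. b y \<le> a y" by auto
    obtain y0 where y0: "y0 \<in> A" "a y0 \<noteq> b y0" using \<open>\<not> (\<forall>y\<in>A. a y = b y)\<close> by auto
    then have "b y0 < a y0" using ge by force
    then have "(\<Sum>y\<in>A. b y) < (\<Sum>y\<in>A. a y)"
      using ge fin y0(1) by (intro sum_strict_mono_ex1) auto
    then show False using sa sb by simp
  qed
  define P where "P = {y\<in>A. a y < b y}"
  define Q where "Q = A - P"
  have PA: "P \<subseteq> A" and finP: "finite P" and finQ: "finite Q" and Pne: "P \<noteq> {}"
    using fin ex by (auto simp: P_def Q_def)
  have spl: "(\<Sum>y\<in>A. h y) = (\<Sum>y\<in>P. h y) + (\<Sum>y\<in>Q. h y)" for h :: "_ \<Rightarrow> 'b::comm_monoid_add"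
    unfolding Q_def using sum.subset_diff[OF PA fin] by (simp add: add.commute)
  have lt: "(\<Sum>y\<in>P. a y) < (\<Sum>y\<in>P. b y)"
    using finP Pne by (intro sum_strict_mono) (auto simp: P_def)
  have "fterm f (\<Sum>y\<in>P. a y) (\<Sum>y\<in>P. b y) + fterm f (\<Sum>y\<in>Q. a y) (\<Sum>y\<in>Q. b y)
      \<le> (\<Sum>y\<in>P. fterm f (a y) (b y)) + (\<Sum>y\<in>Q. fterm f (a y) (b y))"
    using a b PA by (intro add_mono fterm_sum[OF f]) (auto simp: Q_def finP finQ fin)
  also have "\<dots> = 0" using z spl[of "\<lambda>y. fterm f (a y) (b y)"] by simp
  finally have le0: "fterm f (\<Sum>y\<in>P. a y) (\<Sum>y\<in>P. b y) + fterm f (\<Sum>y\<in>Q. a y) (\<Sum>y\<in>Q. b y) \<le> 0" .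
  have "0 < fterm f (\<Sum>y\<in>P. a y) (\<Sum>y\<in>P. b y) + fterm f (\<Sum>y\<in>Q. a y) (\<Sum>y\<in>Q. b y)"
  proof (rule key_pos[OF f f1 sc])
    show "0 \<le> (\<Sum>y\<in>P. a y)" using a PA by (auto intro: sum_nonneg)
    show "0 \<le> (\<Sum>y\<in>Q. b y)" using b by (auto intro: sum_nonneg simp: Q_def)
    show "(\<Sum>y\<in>P. a y) + (\<Sum>y\<in>Q. a y) = 1" using spl[of a] sa by simp
    show "(\<Sum>y\<in>P. b y) + (\<Sum>y\<in>Q. b y) = 1" using spl[of b] sb by simp
  qed (rule lt)
  with le0 show False by simp
qed

lemma fdiv_eq0_iff:
  assumes f: "convex_on {0..} (f::real\<Rightarrow>real)" and f1: "f 1 = 0" and fin: "finite \<Omega>"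
    and pi: "\<forall>x\<in>\<Omega>. 0 < \<pi> x" and M: "trans_mat \<Omega> M" and L: "trans_mat \<Omega> L"
    and sc: "strictly_convex_at_1 f"
  shows "fdiv f \<Omega> \<pi> M L = 0 \<longleftrightarrow> (\<forall>x\<in>\<Omega>. \<forall>y\<in>\<Omega>. M x y = L x y)"
proof
  assume z: "fdiv f \<Omega> \<pi> M L = 0"
  have rn: "0 \<le> (\<Sum>y\<in>\<Omega>. fterm f (M x y) (L x y))" if "x \<in> \<Omega>" for x
    using M L that by (intro row_nonneg[OF f f1 fin]) (auto simp: trans_mat_def)
  have "\<forall>x\<in>\<Omega>. ereal (\<pi> x) * (\<Sum>y\<in>\<Omega>. fterm f (M x y) (L x y)) = 0"
    using z unfolding fdiv_def
    by (subst (asm) sum_nonneg_eq_0_iff[OF fin]) (use rn pi in \<open>auto simp: ereal_zero_le_0_iff\<close>)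
  then have r0: "(\<Sum>y\<in>\<Omega>. fterm f (M x y) (L x y)) = 0" if "x \<in> \<Omega>" for x
    using pi that by force
  show "\<forall>x\<in>\<Omega>. \<forall>y\<in>\<Omega>. M x y = L x y"
  proof
    fix x assume x: "x \<in> \<Omega>"
    show "\<forall>y\<in>\<Omega>. M x y = L x y"
      using M L x r0[OF x] by (intro row_eq[OF f f1 sc fin]) (auto simp: trans_mat_def)
  qed
next
  assume e: "\<forall>x\<in>\<Omega>. \<forall>y\<in>\<Omega>. M x y = L x y"
  have "fterm f a a = 0" for a by (simp add: fterm_def f1)
  then show "fdiv f \<Omega> \<pi> M L = 0" using e by (simp add: fdiv_def)
qed



lemma fterm_convex:
  assumes f: "convex_on {0..} (f::real\<Rightarrow>real)"
    and a1: "a1 \<ge> 0" and a2: "a2 \<ge> 0" and b: "b \<ge> 0" and t: "0 \<le> t" "t \<le> 1"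
  shows "fterm f (t * a1 + (1 - t) * a2) b \<le> ereal t * fterm f a1 b + ereal (1 - t) * fterm f a2 b"
proof (cases "b = 0")
  case False
  then have bp: "b > 0" using b by simp
  have "f ((1 - (1-t)) *\<^sub>R (a1/b) + (1-t) *\<^sub>R (a2/b)) \<le> (1 - (1-t)) * f (a1/b) + (1-t) * f (a2/b)"
    using a1 a2 bp t by (intro convex_onD[OF f]) auto
  then have "f ((t * a1 + (1 - t) * a2) / b) \<le> t * f (a1/b) + (1-t) * f (a2/b)"
    by (simp add: add_divide_distrib)
  then have "b * f ((t * a1 + (1 - t) * a2) / b) \<le> b * (t * f (a1/b) + (1-t) * f (a2/b))"
    using bp by (intro mult_left_mono) auto
  then show ?thesis using bp by (simp add: fterm_def algebra_simps)
next
  case True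
  have nn: "t * a1 + (1 - t) * a2 \<ge> 0" using a1 a2 t by simp
  show ?thesis
  proof (cases "fprime_inf f")
    case (real l)
    then show ?thesis using True a1 a2 nn by (simp add: fterm_zero_right algebra_simps)
  next
    case PInf
    show ?thesis
    proof (cases "t * a1 + (1 - t) * a2 = 0")
      case True
      then show ?thesis using \<open>b = 0\<close> a1 a2 t PInf
        by (auto simp: fterm_def ereal_zero_le_0_iff intro!: add_nonneg_nonneg)
    next
      case False
      then have "t * a1 > 0 \<or> (1 - t) * a2 > 0" using a1 a2 t
        by (smt (verit) mult_nonneg_nonneg)
      then show ?thesis using \<open>b = 0\<close> a1 a2 t PInf False
        by (auto simp: fterm_def zero_less_mult_iff)
    qed
  qed (use fprime_inf_not_minf[OF f] in simp)
qed

lemma fdiv_convex: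
  assumes f: "convex_on {0..} (f::real\<Rightarrow>real)" and fin: "finite \<Omega>"
    and pi: "\<forall>x\<in>\<Omega>. 0 \<le> \<pi> x" and M1: "trans_mat \<Omega> M1" and M2: "trans_mat \<Omega> M2"
    and L: "\<forall>x\<in>\<Omega>. \<forall>y\<in>\<Omega>. 0 \<le> L x y" and t: "0 \<le> t" "t \<le> 1"
  shows "fdiv f \<Omega> \<pi> (\<lambda>x y. t * M1 x y + (1 - t) * M2 x y) L
        \<le> ereal t * fdiv f \<Omega> \<pi> M1 L + ereal (1 - t) * fdiv f \<Omega> \<pi> M2 L"
proof -
  have m1: "0 \<le> M1 x y" and m2: "0 \<le> M2 x y" if "x \<in> \<Omega>" "y \<in> \<Omega>" for x y
    using M1 M2 that by (auto simp: trans_mat_def)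
  define G1 where "G1 x = (\<Sum>y\<in>\<Omega>. fterm f (M1 x y) (L x y))" for x
  define G2 where "G2 x = (\<Sum>y\<in>\<Omega>. fterm f (M2 x y) (L x y))" for x
  have G1nm: "G1 x \<noteq> -\<infinity>" and G2nm: "G2 x \<noteq> -\<infinity>" if "x \<in> \<Omega>" for x
    unfolding G1_def G2_def using that m1 m2
    by (auto intro!: sum_not_minf fterm_not_minf[OF f])
  have P1nm: "ereal (\<pi> x) * G1 x \<noteq> -\<infinity>" and P2nm: "ereal (\<pi> x) * G2 x \<noteq> -\<infinity>"
    if "x \<in> \<Omega>" for x
    using that pi G1nm G2nm by (auto intro!: ereal_mult_nn_not_minf)
  have row: "ereal (\<pi> x) * (\<Sum>y\<in>\<Omega>. fterm f (t * M1 x y + (1 - t) * M2 x y) (L x y))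
      \<le> ereal t * (ereal (\<pi> x) * G1 x) + ereal (1 - t) * (ereal (\<pi> x) * G2 x)" if x: "x \<in> \<Omega>" for x
  proof -
    have "(\<Sum>y\<in>\<Omega>. fterm f (t * M1 x y + (1 - t) * M2 x y) (L x y))
        \<le> (\<Sum>y\<in>\<Omega>. ereal t * fterm f (M1 x y) (L x y) + ereal (1 - t) * fterm f (M2 x y) (L x y))"
      using x m1 m2 L t by (intro sum_mono fterm_convex[OF f]) auto
    also have "\<dots> = ereal t * G1 x + ereal (1 - t) * G2 x"
      unfolding G1_def G2_def sum.distrib using x m1 m2 t
      by (subst (1 2) ereal_sum_distrib_nn) (auto intro!: fterm_not_minf[OF f])
    finally have "ereal (\<pi> x) * (\<Sum>y\<in>\<Omega>. fterm f (t * M1 x y + (1 - t) * M2 x y) (L x y))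
        \<le> ereal (\<pi> x) * (ereal t * G1 x + ereal (1 - t) * G2 x)"
      using pi x by (intro ereal_mult_left_mono) auto
    also have "\<dots> = ereal t * (ereal (\<pi> x) * G1 x) + ereal (1 - t) * (ereal (\<pi> x) * G2 x)"
      using pi x t G1nm[OF x] G2nm[OF x]
      by (subst ereal_mult_distrib_nn) (auto intro!: ereal_mult_nn_not_minf simp: mult_ac)
    finally show ?thesis .
  qed
  have "fdiv f \<Omega> \<pi> (\<lambda>x y. t * M1 x y + (1 - t) * M2 x y) L
      \<le> (\<Sum>x\<in>\<Omega>. ereal t * (ereal (\<pi> x) * G1 x) + ereal (1 - t) * (ereal (\<pi> x) * G2 x))"
    unfolding fdiv_def by (intro sum_mono row)
  also have "\<dots> = ereal t * fdiv f \<Omega> \<pi> M1 L + ereal (1 - t) * fdiv f \<Omega> \<pi> M2 L"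
    unfolding fdiv_def sum.distrib G1_def[symmetric] G2_def[symmetric] using t P1nm P2nm
    by (subst (1 2) ereal_sum_distrib_nn) auto
  finally show ?thesis .
qed



lemma finite_prod_space: "\<forall>i\<in>{1..d}. finite (S i) \<Longrightarrow> finite (prod_space d S)"
  unfolding prod_space_def by (auto intro!: finite_PiE)

lemma sum_prod_space:
  assumes "\<forall>i\<in>{1..d}. finite (S i)"
  shows "(\<Sum>x\<in>prod_space d S. \<Prod>i\<in>{1..d}. g i (x i)) = (\<Prod>i\<in>{1..d}. \<Sum>a\<in>S i. (g i a :: real))"
  unfolding prod_space_def using assms by (subst prod_sum_PiE) auto

lemma sum2_prod_space:
  assumes "\<forall>i\<in>{1..d}. finite (S i)"
  shows "(\<Sum>x\<in>prod_space d S. \<Sum>y\<in>prod_space d S. \<Prod>i\<in>{1..d}. h i (x i) (y i))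
       = (\<Prod>i\<in>{1..d}. \<Sum>a\<in>S i. \<Sum>b\<in>S i. (h i a b :: real))"
proof -
  have "(\<Sum>x\<in>prod_space d S. \<Sum>y\<in>prod_space d S. \<Prod>i\<in>{1..d}. h i (x i) (y i))
      = (\<Sum>x\<in>prod_space d S. \<Prod>i\<in>{1..d}. \<Sum>b\<in>S i. h i (x i) b)"
  proof (rule sum.cong)
    fix x assume "x \<in> prod_space d S"
    show "(\<Sum>y\<in>prod_space d S. \<Prod>i\<in>{1..d}. h i (x i) (y i)) = (\<Prod>i\<in>{1..d}. \<Sum>b\<in>S i. h i (x i) b)"
      using sum_prod_space[OF assms, of "\<lambda>i b. h i (x i) b"] by simp
  qed simp
  also have "\<dots> = (\<Prod>i\<in>{1..d}. \<Sum>a\<in>S i. \<Sum>b\<in>S i. h i a b)"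
    using sum_prod_space[OF assms, of "\<lambda>i a. \<Sum>b\<in>S i. h i a b"] by simp
  finally show ?thesis .
qed

lemma mem_prod_space: "x \<in> prod_space d S \<Longrightarrow> i \<in> {1..d} \<Longrightarrow> x i \<in> S i"
  unfolding prod_space_def by auto

lemma tensor_trans:
  assumes fin: "\<forall>i\<in>{1..d}. finite (S i)" and L: "\<forall>i\<in>{1..d}. trans_mat (S i) (Ls i)"
  shows "trans_mat (prod_space d S) (tensor_mat d Ls)"
  unfolding trans_mat_def
proof safe
  fix x y assume x: "x \<in> prod_space d S" and y: "y \<in> prod_space d S"
  show "0 \<le> tensor_mat d Ls x y" unfolding tensor_mat_def
    using L mem_prod_space[OF x] mem_prod_space[OF y] by (auto intro!: prod_nonneg simp: trans_mat_def)
next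
  fix x assume x: "x \<in> prod_space d S"
  have "(\<Sum>y\<in>prod_space d S. tensor_mat d Ls x y) = (\<Prod>i\<in>{1..d}. \<Sum>b\<in>S i. Ls i (x i) b)"
    unfolding tensor_mat_def by (rule sum_prod_space[OF fin])
  also have "\<dots> = 1" using L mem_prod_space[OF x] by (intro prod.neutral) (auto simp: trans_mat_def)
  finally show "(\<Sum>y\<in>prod_space d S. tensor_mat d Ls x y) = 1" .
qed

lemma tensor_prob:
  assumes fin: "\<forall>i\<in>{1..d}. finite (S i)" and p: "\<forall>i\<in>{1..d}. prob_mass (S i) (ps i)"
  shows "prob_mass (prod_space d S) (tensor_mass d ps)"
  unfolding prob_mass_def
proof safe
  fix x assume x: "x \<in> prod_space d S"
  show "0 \<le> tensor_mass d ps x" unfolding tensor_mass_def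
    using p mem_prod_space[OF x] by (auto intro!: prod_nonneg simp: prob_mass_def)
next
  have "(\<Sum>x\<in>prod_space d S. tensor_mass d ps x) = (\<Prod>i\<in>{1..d}. \<Sum>a\<in>S i. ps i a)"
    unfolding tensor_mass_def by (rule sum_prod_space[OF fin])
  also have "\<dots> = 1" using p by (intro prod.neutral) (auto simp: prob_mass_def)
  finally show "(\<Sum>x\<in>prod_space d S. tensor_mass d ps x) = 1" .
qed

lemma sqrt_prod: "sqrt (prod g A) = (\<Prod>i\<in>A. sqrt (g i))"
  by (induction A rule: infinite_finite_induct) (auto simp: real_sqrt_mult)



lemma fprime_inf_hell: "fprime_inf hellinger_fun = 1"
proof -
  have T: "((\<lambda>x. ereal ((1 - sqrt x)^2)) \<longlongrightarrow> ereal ((1 - sqrt 0)^2)) (at_right 0)"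
    by (intro tendsto_ereal tendsto_eq_intros) (auto intro: tendsto_real_sqrt)
  have "((\<lambda>x. ereal (x * hellinger_fun (1 / x))) \<longlongrightarrow> ereal 1) (at_right 0)"
  proof (rule Lim_transform_eventually)
    show "((\<lambda>x. ereal ((1 - sqrt x)^2)) \<longlongrightarrow> ereal 1) (at_right 0)" using T by simp
    show "\<forall>\<^sub>F x in at_right 0. ereal ((1 - sqrt x)\<^sup>2) = ereal (x * hellinger_fun (1 / x))"
      using eventually_at_right_real[OF zero_less_one]
    proof (rule eventually_mono)
      fix x :: real assume x: "x \<in> {0<..<1}"
      have xp: "0 < x" using x by simp
      have "x * hellinger_fun (1 / x) = x * (1 / sqrt x - 1)^2"
        by (simp add: hellinger_fun_def real_sqrt_divide)
      also have "\<dots> = (sqrt x)^2 * (1 / sqrt x - 1)^2" using xp by simp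
      also have "\<dots> = (sqrt x * (1 / sqrt x - 1))^2" by (simp add: power_mult_distrib)
      also have "sqrt x * (1 / sqrt x - 1) = 1 - sqrt x" using xp by (simp add: right_diff_distrib)
      finally show "ereal ((1 - sqrt x)\<^sup>2) = ereal (x * hellinger_fun (1 / x))" by simp
    qed
  qed
  then show ?thesis unfolding fprime_inf_def by (subst tendsto_Lim) (auto simp: one_ereal_def)
qed

lemma fterm_hell:
  assumes "a \<ge> 0" "b \<ge> 0"
  shows "fterm hellinger_fun a b = ereal ((sqrt a - sqrt b)^2)"
proof (cases "b = 0")
  case True
  then show ?thesis using assms by (simp add: fterm_def fprime_inf_hell)
next
  case False
  then have bp: "b > 0" using assms by simp
  have "b * (sqrt (a / b) - 1)^2 = (sqrt b)^2 * (sqrt a / sqrt b - 1)^2"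
    using assms by (simp add: real_sqrt_divide)
  also have "\<dots> = (sqrt a - sqrt b)^2" using bp by (simp add: power2_eq_square field_simps)
  finally show ?thesis using False by (simp add: fterm_def hellinger_fun_def)
qed

definition BC :: "'x set \<Rightarrow> ('x \<Rightarrow> real) \<Rightarrow> ('x \<Rightarrow> 'x \<Rightarrow> real) \<Rightarrow> ('x \<Rightarrow> 'x \<Rightarrow> real) \<Rightarrow> real" where
  "BC \<Omega> \<pi> M L = (\<Sum>x\<in>\<Omega>. \<Sum>y\<in>\<Omega>. \<pi> x * (sqrt (M x y) * sqrt (L x y)))"

lemma hell_div:
  assumes fin: "finite \<Omega>" and pi: "prob_mass \<Omega> \<pi>" and M: "trans_mat \<Omega> M" and L: "trans_mat \<Omega> L"
  shows "fdiv hellinger_fun \<Omega> \<pi> M L = ereal (2 - 2 * BC \<Omega> \<pi> M L)"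
proof -
  have row: "(\<Sum>y\<in>\<Omega>. (sqrt (M x y) - sqrt (L x y))^2) = 2 - 2 * (\<Sum>y\<in>\<Omega>. sqrt (M x y) * sqrt (L x y))"
    if x: "x \<in> \<Omega>" for x
  proof -
    have "(\<Sum>y\<in>\<Omega>. (sqrt (M x y) - sqrt (L x y))^2)
        = (\<Sum>y\<in>\<Omega>. M x y + L x y - 2 * (sqrt (M x y) * sqrt (L x y)))"
      using M L x by (intro sum.cong) (auto simp: trans_mat_def power2_diff)
    also have "\<dots> = 2 - 2 * (\<Sum>y\<in>\<Omega>. sqrt (M x y) * sqrt (L x y))"
      using M L x by (simp add: sum_subtractf sum.distrib sum_distrib_left trans_mat_def)
    finally show ?thesis .
  qed
  have "fdiv hellinger_fun \<Omega> \<pi> M L = ereal (\<Sum>x\<in>\<Omega>. \<pi> x * (\<Sum>y\<in>\<Omega>. (sqrt (M x y) - sqrt (L x y))^2))"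
    unfolding fdiv_def using M L
    by (simp add: fterm_hell trans_mat_def)
  also have "\<dots> = ereal (\<Sum>x\<in>\<Omega>. \<pi> x * (2 - 2 * (\<Sum>y\<in>\<Omega>. sqrt (M x y) * sqrt (L x y))))"
    using row by simp
  also have "\<dots> = ereal (2 - 2 * BC \<Omega> \<pi> M L)"
  proof -
    have "(\<Sum>x\<in>\<Omega>. \<pi> x * (2 - 2 * (\<Sum>y\<in>\<Omega>. sqrt (M x y) * sqrt (L x y))))
        = (\<Sum>x\<in>\<Omega>. 2 * \<pi> x - 2 * (\<Sum>y\<in>\<Omega>. \<pi> x * (sqrt (M x y) * sqrt (L x y))))"
      by (intro sum.cong) (auto simp: right_diff_distrib sum_distrib_left mult_ac)
    also have "\<dots> = 2 * (\<Sum>x\<in>\<Omega>. \<pi> x) - 2 * BC \<Omega> \<pi> M L"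
      unfolding BC_def by (simp add: sum_subtractf sum_distrib_left)
    finally show ?thesis using pi by (simp add: prob_mass_def)
  qed
  finally show ?thesis .
qed

lemma BC_bounds:
  assumes fin: "finite \<Omega>" and pi: "prob_mass \<Omega> \<pi>" and M: "trans_mat \<Omega> M" and L: "trans_mat \<Omega> L"
  shows "0 \<le> BC \<Omega> \<pi> M L" "BC \<Omega> \<pi> M L \<le> 1"
proof -
  show "0 \<le> BC \<Omega> \<pi> M L" unfolding BC_def using pi M L
    by (auto intro!: sum_nonneg mult_nonneg_nonneg simp: prob_mass_def trans_mat_def)
  have "BC \<Omega> \<pi> M L \<le> (\<Sum>x\<in>\<Omega>. \<Sum>y\<in>\<Omega>. \<pi> x * ((M x y + L x y) / 2))"
    unfolding BC_def
  proof (intro sum_mono mult_left_mono)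
    fix x y assume "x \<in> \<Omega>" "y \<in> \<Omega>"
    then have "0 \<le> M x y" "0 \<le> L x y" "0 \<le> \<pi> x" using pi M L by (auto simp: prob_mass_def trans_mat_def)
    then show "sqrt (M x y) * sqrt (L x y) \<le> (M x y + L x y) / 2" "0 \<le> \<pi> x"
      using arith_geo_mean_sqrt[of "M x y" "L x y"] by (auto simp: real_sqrt_mult)
  qed
  also have "\<dots> = (\<Sum>x\<in>\<Omega>. \<pi> x * (((\<Sum>y\<in>\<Omega>. M x y) + (\<Sum>y\<in>\<Omega>. L x y)) / 2))"
    by (simp add: sum_distrib_left[symmetric] sum.distrib sum_divide_distrib[symmetric])
  also have "\<dots> = (\<Sum>x\<in>\<Omega>. \<pi> x)"
    using M L by (intro sum.cong) (auto simp: trans_mat_def)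
  also have "\<dots> = 1" using pi by (simp add: prob_mass_def)
  finally show "BC \<Omega> \<pi> M L \<le> 1" .
qed



lemma BC_tensor:
  assumes fin: "\<forall>i\<in>{1..d}. finite (S i)"
  shows "BC (prod_space d S) (tensor_mass d ps) (tensor_mat d Ms) (tensor_mat d Ls)
       = (\<Prod>i\<in>{1..d}. BC (S i) (ps i) (Ms i) (Ls i))"
proof -
  have "BC (prod_space d S) (tensor_mass d ps) (tensor_mat d Ms) (tensor_mat d Ls)
      = (\<Sum>x\<in>prod_space d S. \<Sum>y\<in>prod_space d S. \<Prod>i\<in>{1..d}.
           ps i (x i) * (sqrt (Ms i (x i) (y i)) * sqrt (Ls i (x i) (y i))))"
    unfolding BC_def tensor_mass_def tensor_mat_def by (simp add: sqrt_prod prod.distrib)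
  also have "\<dots> = (\<Prod>i\<in>{1..d}. \<Sum>a\<in>S i. \<Sum>b\<in>S i. ps i a * (sqrt (Ms i a b) * sqrt (Ls i a b)))"
    by (rule sum2_prod_space[OF fin])
  finally show ?thesis by (simp add: BC_def)
qed

lemma prod_le_each:
  fixes B :: "nat \<Rightarrow> real"
  assumes "finite I" "i \<in> I" "\<forall>j\<in>I. 0 \<le> B j \<and> B j \<le> 1"
  shows "prod B I \<le> B i"
proof -
  have "prod B I = B i * prod B (I - {i})" using assms by (simp add: prod.remove)
  also have "\<dots> \<le> B i * 1" using assms
    by (intro mult_left_mono prod_le_1) auto
  finally show ?thesis by simp
qed

lemma one_minus_prod:
  fixes B :: "nat \<Rightarrow> real"
  assumes "finite I" "\<forall>j\<in>I. 0 \<le> B j \<and> B j \<le> 1"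
  shows "1 - prod B I \<le> (\<Sum>j\<in>I. 1 - B j)"
  using assms
proof (induction I rule: finite_induct)
  case (insert x F)
  have P: "0 \<le> prod B F" "prod B F \<le> 1" using insert by (auto intro: prod_nonneg prod_le_1)
  have b: "0 \<le> B x" "B x \<le> 1" using insert by auto
  have "0 \<le> (1 - B x) * (1 - prod B F)" using P b by simp
  then have "1 - B x * prod B F \<le> (1 - B x) + (1 - prod B F)" by (simp add: algebra_simps)
  also have "\<dots> \<le> (1 - B x) + (\<Sum>j\<in>F. 1 - B j)" using insert by simp
  finally show ?case using insert by simp
qed simp

lemma part4:
  assumes d_pos: "1 \<le> d" and fin: "\<forall>i\<in>{1..d}. finite (S i)"
    and Ms: "\<forall>i\<in>{1..d}. trans_mat (S i) (Ms i)"
    and Ls: "\<forall>i\<in>{1..d}. trans_mat (S i) (Ls i)"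
    and ps: "\<forall>i\<in>{1..d}. prob_mass (S i) (\<pi>s i)"
  shows "Max ((\<lambda>i. fdiv hellinger_fun (S i) (\<pi>s i) (Ms i) (Ls i)) ` {1..d})
         \<le> fdiv hellinger_fun (prod_space d S) (tensor_mass d \<pi>s) (tensor_mat d Ms) (tensor_mat d Ls)
       \<and> fdiv hellinger_fun (prod_space d S) (tensor_mass d \<pi>s) (tensor_mat d Ms) (tensor_mat d Ls)
         \<le> (\<Sum>i\<in>{1..d}. fdiv hellinger_fun (S i) (\<pi>s i) (Ms i) (Ls i))"
proof -
  define B where "B i = BC (S i) (\<pi>s i) (Ms i) (Ls i)" for i
  have Bb: "\<forall>j\<in>{1..d}. 0 \<le> B j \<and> B j \<le> 1"
  proof
    fix j assume j: "j \<in> {1..d}"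
    show "0 \<le> B j \<and> B j \<le> 1" unfolding B_def
      using BC_bounds[of "S j" "\<pi>s j" "Ms j" "Ls j"] j fin Ms Ls ps by auto
  qed
  have Di: "fdiv hellinger_fun (S i) (\<pi>s i) (Ms i) (Ls i) = ereal (2 - 2 * B i)" if "i \<in> {1..d}" for i
    using that fin Ms Ls ps by (simp add: hell_div B_def)
  have D: "fdiv hellinger_fun (prod_space d S) (tensor_mass d \<pi>s) (tensor_mat d Ms) (tensor_mat d Ls)
      = ereal (2 - 2 * prod B {1..d})"
    by (simp add: hell_div finite_prod_space[OF fin] tensor_prob[OF fin ps] tensor_trans[OF fin Ms]
        tensor_trans[OF fin Ls] BC_tensor[OF fin] B_def)
  show ?thesis
  proof
    show "Max ((\<lambda>i. fdiv hellinger_fun (S i) (\<pi>s i) (Ms i) (Ls i)) ` {1..d})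
         \<le> fdiv hellinger_fun (prod_space d S) (tensor_mass d \<pi>s) (tensor_mat d Ms) (tensor_mat d Ls)"
    proof -
      have all: "\<forall>i\<in>{1..d}. fdiv hellinger_fun (S i) (\<pi>s i) (Ms i) (Ls i) \<le> ereal (2 - 2 * prod B {1..d})"
      proof
        fix i assume i: "i \<in> {1..d}"
        have "prod B {1..d} \<le> B i" using i Bb by (intro prod_le_each) auto
        then show "fdiv hellinger_fun (S i) (\<pi>s i) (Ms i) (Ls i) \<le> ereal (2 - 2 * prod B {1..d})"
          using i by (simp add: Di)
      qed
      show ?thesis unfolding D using d_pos all by (subst Max_le_iff) auto
    qed
    have "1 - prod B {1..d} \<le> (\<Sum>j\<in>{1..d}. 1 - B j)" using Bb by (intro one_minus_prod) auto
    then have "2 - 2 * prod B {1..d} \<le> (\<Sum>j\<in>{1..d}. 2 - 2 * B j)"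
      by (simp add: sum_subtractf sum_distrib_left[symmetric])
    then show "fdiv hellinger_fun (prod_space d S) (tensor_mass d \<pi>s) (tensor_mat d Ms) (tensor_mat d Ls)
         \<le> (\<Sum>i\<in>{1..d}. fdiv hellinger_fun (S i) (\<pi>s i) (Ms i) (Ls i))"
      unfolding D by (simp add: Di)
  qed
qed



lemma fprime_inf_KL: "fprime_inf KL_fun = \<infinity>"
proof -
  have "((\<lambda>x. ereal (x * KL_fun (1 / x))) \<longlongrightarrow> \<infinity>) (at_right 0)"
    unfolding tendsto_PInfty
  proof
    fix r :: real
    have "eventually (\<lambda>x. x \<in> {0<..<exp (-r)}) (at_right 0)" by (intro eventually_at_right_real) simp
    then show "\<forall>\<^sub>F x in at_right 0. ereal r < ereal (x * KL_fun (1 / x))"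
    proof (rule eventually_mono)
      fix x assume x: "x \<in> {0<..<exp (-r)}"
      then have "ln x < -r" using ln_less_cancel_iff[of x "exp (-r)"] by auto
      moreover have "x * KL_fun (1 / x) = - ln x" using x by (simp add: KL_fun_def ln_div)
      ultimately show "ereal r < ereal (x * KL_fun (1 / x))" by simp
    qed
  qed
  then show ?thesis unfolding fprime_inf_def by (subst tendsto_Lim) auto
qed

lemma KL_finite:
  assumes fin: "finite \<Omega>" and pi: "\<forall>x\<in>\<Omega>. 0 \<le> \<pi> x"
    and M: "\<forall>x\<in>\<Omega>. \<forall>y\<in>\<Omega>. 0 \<le> M x y" and L: "\<forall>x\<in>\<Omega>. \<forall>y\<in>\<Omega>. 0 \<le> L x y"
    and good: "\<forall>x\<in>\<Omega>. \<forall>y\<in>\<Omega>. 0 < \<pi> x \<longrightarrow> 0 < M x y \<longrightarrow> 0 < L x y"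
  shows "fdiv KL_fun \<Omega> \<pi> M L = ereal (\<Sum>x\<in>\<Omega>. \<Sum>y\<in>\<Omega>. \<pi> x * (M x y * ln (M x y / L x y)))"
proof -
  have row: "ereal (\<pi> x) * (\<Sum>y\<in>\<Omega>. fterm KL_fun (M x y) (L x y))
      = ereal (\<Sum>y\<in>\<Omega>. \<pi> x * (M x y * ln (M x y / L x y)))" if x: "x \<in> \<Omega>" for x
  proof -
  show "ereal (\<pi> x) * (\<Sum>y\<in>\<Omega>. fterm KL_fun (M x y) (L x y))
      = ereal (\<Sum>y\<in>\<Omega>. \<pi> x * (M x y * ln (M x y / L x y)))"
  proof (cases "\<pi> x = 0")
    case True then show ?thesis by (simp add: zero_ereal_def[symmetric])
  next
    case False
    then have px: "\<pi> x > 0" using pi x by (simp add: less_le)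
    have "(\<Sum>y\<in>\<Omega>. fterm KL_fun (M x y) (L x y)) = (\<Sum>y\<in>\<Omega>. ereal (M x y * ln (M x y / L x y)))"
    proof (rule sum.cong[OF refl])
      fix y assume y: "y \<in> \<Omega>"
      show "fterm KL_fun (M x y) (L x y) = ereal (M x y * ln (M x y / L x y))"
      proof (cases "M x y = 0")
        case True then show ?thesis by (simp add: fterm_def KL_fun_def)
      next
        case False
        then have "M x y > 0" using M x y by (simp add: less_le)
        then have "L x y > 0" using good x y px by auto
        then show ?thesis by (simp add: fterm_def KL_fun_def)
      qed
    qed
    then show ?thesis by (simp add: sum_distrib_left)
  qed
  qed
  show ?thesis unfolding fdiv_def using row by (simp add: sum_ereal[symmetric] del: sum_ereal)
qed

lemma KL_infinite:
  assumes fin: "finite \<Omega>" and pi: "\<forall>x\<in>\<Omega>. 0 \<le> \<pi> x"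
    and bad: "x \<in> \<Omega>" "y \<in> \<Omega>" "0 < \<pi> x" "0 < M x y" "L x y = 0"
  shows "fdiv KL_fun \<Omega> \<pi> M L = \<infinity>"
proof -
  have "(\<Sum>y\<in>\<Omega>. fterm KL_fun (M x y) (L x y)) = \<infinity>"
    using bad fin by (subst sum_Pinfty) (auto intro!: bexI[of _ y] simp: fterm_def fprime_inf_KL)
  then have "ereal (\<pi> x) * (\<Sum>y\<in>\<Omega>. fterm KL_fun (M x y) (L x y)) = \<infinity>" using bad by simp
  then show ?thesis unfolding fdiv_def using fin bad by (subst sum_Pinfty) auto
qed

lemma exists_pos:
  fixes p :: "'b \<Rightarrow> real"
  assumes "(\<Sum>a\<in>A. p a) = 1" "\<forall>a\<in>A. 0 \<le> p a"
  shows "\<exists>a\<in>A. 0 < p a"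
proof (rule ccontr)
  assume "\<not> ?thesis"
  then have "\<forall>a\<in>A. p a = 0" using assms(2) by force
  then have "(\<Sum>a\<in>A. p a) = 0" by simp
  with assms(1) show False by simp
qed



lemma prod_pos_iff_nn:
  fixes g :: "nat \<Rightarrow> real"
  assumes "finite I" "\<forall>i\<in>I. 0 \<le> g i"
  shows "0 < prod g I \<longleftrightarrow> (\<forall>i\<in>I. 0 < g i)"
proof
  assume p: "0 < prod g I"
  show "\<forall>i\<in>I. 0 < g i"
  proof
    fix i assume i: "i \<in> I"
    show "0 < g i"
    proof (rule ccontr)
      assume "\<not> 0 < g i"
      then have "g i = 0" using assms i by force
      then have "prod g I = 0" using assms(1) i by (auto simp: prod_zero_iff)
      with p show False by simp
    qed
  qed
qed (auto intro: prod_pos)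

lemma part3:
  assumes fin: "\<forall>i\<in>{1..d}. finite (S i)"
    and Ms: "\<forall>i\<in>{1..d}. trans_mat (S i) (Ms i)"
    and Ls: "\<forall>i\<in>{1..d}. trans_mat (S i) (Ls i)"
    and ps: "\<forall>i\<in>{1..d}. prob_mass (S i) (\<pi>s i)"
  shows "fdiv KL_fun (prod_space d S) (tensor_mass d \<pi>s) (tensor_mat d Ms) (tensor_mat d Ls)
       = (\<Sum>i\<in>{1..d}. fdiv KL_fun (S i) (\<pi>s i) (Ms i) (Ls i))"
proof -
  define I where "I = {1..d}"
  define X where "X = prod_space d S"
  define P where "P = tensor_mass d \<pi>s"
  define TM where "TM = tensor_mat d Ms"
  define TL where "TL = tensor_mat d Ls"
  have finX: "finite X" unfolding X_def by (rule finite_prod_space[OF fin])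
  have finI: "finite I" by (simp add: I_def)
  have PX: "prob_mass X P" unfolding X_def P_def by (rule tensor_prob[OF fin ps])
  have TMX: "trans_mat X TM" unfolding X_def TM_def by (rule tensor_trans[OF fin Ms])
  have TLX: "trans_mat X TL" unfolding X_def TL_def by (rule tensor_trans[OF fin Ls])
  have memX: "x j \<in> S j" if "x \<in> X" "j \<in> I" for x j
    using that mem_prod_space unfolding X_def I_def by blast
  have psnn: "0 \<le> \<pi>s j a" if "j \<in> I" "a \<in> S j" for j a
    using ps that by (auto simp: prob_mass_def I_def)
  have Msnn: "0 \<le> Ms j a b" if "j \<in> I" "a \<in> S j" "b \<in> S j" for j a b
    using Ms that by (auto simp: trans_mat_def I_def)
  have Lsnn: "0 \<le> Ls j a b" if "j \<in> I" "a \<in> S j" "b \<in> S j" for j a b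
    using Ls that by (auto simp: trans_mat_def I_def)
  have Ppos: "0 < P x \<longleftrightarrow> (\<forall>j\<in>I. 0 < \<pi>s j (x j))" if "x \<in> X" for x
    unfolding P_def tensor_mass_def I_def[symmetric]
    using that finI memX psnn by (intro prod_pos_iff_nn) auto
  have TMpos: "0 < TM x y \<longleftrightarrow> (\<forall>j\<in>I. 0 < Ms j (x j) (y j))" if "x \<in> X" "y \<in> X" for x y
    unfolding TM_def tensor_mat_def I_def[symmetric]
    using that finI memX Msnn by (intro prod_pos_iff_nn) auto
  show ?thesis
  proof (cases "\<forall>i\<in>I. \<forall>a\<in>S i. \<forall>b\<in>S i. 0 < \<pi>s i a \<longrightarrow> 0 < Ms i a b \<longrightarrow> 0 < Ls i a b")
    case True
    define A where "A i = (\<Sum>a\<in>S i. \<Sum>b\<in>S i. \<pi>s i a * (Ms i a b * ln (Ms i a b / Ls i a b)))" for i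
    have Di: "fdiv KL_fun (S i) (\<pi>s i) (Ms i) (Ls i) = ereal (A i)" if i: "i \<in> I" for i
      unfolding A_def using True i fin psnn Msnn Lsnn by (intro KL_finite) (auto simp: I_def)
    have goodX: "\<forall>x\<in>X. \<forall>y\<in>X. 0 < P x \<longrightarrow> 0 < TM x y \<longrightarrow> 0 < TL x y"
    proof (intro ballI impI)
      fix x y assume xy: "x \<in> X" "y \<in> X" and p: "0 < P x" "0 < TM x y"
      show "0 < TL x y" unfolding TL_def tensor_mat_def I_def[symmetric]
        using True Ppos[OF xy(1)] TMpos[OF xy] p memX xy by (intro prod_pos) auto
    qed
    have LHS: "fdiv KL_fun X P TM TL = ereal (\<Sum>x\<in>X. \<Sum>y\<in>X. P x * (TM x y * ln (TM x y / TL x y)))"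
      using finX PX TMX TLX goodX by (intro KL_finite) (auto simp: prob_mass_def trans_mat_def)
    define h where "h i j a b = \<pi>s j a * Ms j a b * (if j = i then ln (Ms i a b / Ls i a b) else 1)" for i j a b
    have key: "P x * (TM x y * ln (TM x y / TL x y)) = (\<Sum>i\<in>I. \<Prod>j\<in>I. h i j (x j) (y j))"
      if xy: "x \<in> X" "y \<in> X" for x y
    proof -
      have pr: "(\<Prod>j\<in>I. h i j (x j) (y j)) = P x * TM x y * ln (Ms i (x i) (y i) / Ls i (x i) (y i))"
        if i: "i \<in> I" for i
        unfolding h_def prod.distrib P_def TM_def tensor_mass_def tensor_mat_def I_def[symmetric]
        using finI i by (simp add: prod.delta)
      have R: "(\<Sum>i\<in>I. \<Prod>j\<in>I. h i j (x j) (y j))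
          = P x * TM x y * (\<Sum>i\<in>I. ln (Ms i (x i) (y i) / Ls i (x i) (y i)))"
        by (simp add: pr sum_distrib_left)
      show ?thesis
      proof (cases "0 < P x \<and> 0 < TM x y")
        case pos: True
        then have c: "\<forall>j\<in>I. 0 < Ms j (x j) (y j)" "\<forall>j\<in>I. 0 < Ls j (x j) (y j)"
          using Ppos[OF xy(1)] TMpos[OF xy] True memX xy by auto
        have "ln (TM x y / TL x y) = ln (\<Prod>j\<in>I. Ms j (x j) (y j) / Ls j (x j) (y j))"
          unfolding TM_def TL_def tensor_mat_def I_def[symmetric] by (simp add: prod_dividef)
        also have "\<dots> = (\<Sum>j\<in>I. ln (Ms j (x j) (y j) / Ls j (x j) (y j)))"
          using c finI by (intro ln_prod) auto
        finally show ?thesis using R by simp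
      next
        case False
        then have "P x * TM x y = 0"
          using PX TMX xy by (fastforce simp: prob_mass_def trans_mat_def less_le)
        then show ?thesis using R by (metis mult.assoc mult_zero_left)
      qed
    qed
    have hsum: "(\<Sum>a\<in>S j. \<Sum>b\<in>S j. h i j a b) = (if j = i then A i else 1)"
      if i: "i \<in> I" and j: "j \<in> I" for i j
    proof (cases "j = i")
      case True
      then show ?thesis unfolding h_def A_def by (simp add: mult.assoc)
    next
      case False
      have "(\<Sum>a\<in>S j. \<Sum>b\<in>S j. h i j a b) = (\<Sum>a\<in>S j. \<pi>s j a * (\<Sum>b\<in>S j. Ms j a b))"
        unfolding h_def using False by (simp add: sum_distrib_left)
      also have "\<dots> = (\<Sum>a\<in>S j. \<pi>s j a)"
        using Ms j by (intro sum.cong) (auto simp: trans_mat_def I_def)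
      also have "\<dots> = 1" using ps j by (simp add: prob_mass_def I_def)
      finally show ?thesis using False by simp
    qed
    have "(\<Sum>x\<in>X. \<Sum>y\<in>X. P x * (TM x y * ln (TM x y / TL x y)))
        = (\<Sum>x\<in>X. \<Sum>y\<in>X. \<Sum>i\<in>I. \<Prod>j\<in>I. h i j (x j) (y j))"
      using key by simp
    also have "\<dots> = (\<Sum>i\<in>I. \<Sum>x\<in>X. \<Sum>y\<in>X. \<Prod>j\<in>I. h i j (x j) (y j))"
    proof -
      have "(\<Sum>x\<in>X. \<Sum>y\<in>X. \<Sum>i\<in>I. \<Prod>j\<in>I. h i j (x j) (y j))
          = (\<Sum>x\<in>X. \<Sum>i\<in>I. \<Sum>y\<in>X. \<Prod>j\<in>I. h i j (x j) (y j))"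
        by (rule sum.cong[OF refl], rule sum.swap)
      also have "\<dots> = (\<Sum>i\<in>I. \<Sum>x\<in>X. \<Sum>y\<in>X. \<Prod>j\<in>I. h i j (x j) (y j))"
        by (rule sum.swap)
      finally show ?thesis .
    qed
    also have "\<dots> = (\<Sum>i\<in>I. \<Prod>j\<in>I. \<Sum>a\<in>S j. \<Sum>b\<in>S j. h i j a b)"
      unfolding X_def I_def using sum2_prod_space[OF fin] by simp
    also have "\<dots> = (\<Sum>i\<in>I. \<Prod>j\<in>I. (if j = i then A i else 1))"
      using hsum by (intro sum.cong prod.cong) auto
    also have "\<dots> = (\<Sum>i\<in>I. A i)" using finI by (simp add: prod.delta)
    finally have "fdiv KL_fun X P TM TL = ereal (\<Sum>i\<in>I. A i)" using LHS by simp
    also have "\<dots> = (\<Sum>i\<in>I. fdiv KL_fun (S i) (\<pi>s i) (Ms i) (Ls i))"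
      using Di by simp
    finally show ?thesis unfolding X_def P_def TM_def TL_def I_def .
  next
    case False
    then obtain i a b where iab: "i \<in> I" "a \<in> S i" "b \<in> S i" "0 < \<pi>s i a" "0 < Ms i a b" "\<not> 0 < Ls i a b"
      by blast
    have L0: "Ls i a b = 0" using iab Lsnn by force
    have Dinf: "fdiv KL_fun (S i) (\<pi>s i) (Ms i) (Ls i) = \<infinity>"
      using iab L0 fin psnn by (intro KL_infinite[of _ _ a b]) (auto simp: I_def)
    have RHS: "(\<Sum>i\<in>{1..d}. fdiv KL_fun (S i) (\<pi>s i) (Ms i) (Ls i)) = \<infinity>"
      using Dinf iab by (subst sum_Pinfty) (auto simp: I_def)
    have "\<forall>j\<in>I. \<exists>c. c \<in> S j \<and> 0 < \<pi>s j c"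
      using exists_pos ps unfolding prob_mass_def I_def by blast
    then obtain px where px: "\<forall>j\<in>I. px j \<in> S j \<and> 0 < \<pi>s j (px j)" by (metis bchoice)
    define x where "x = (\<lambda>j. if j \<in> I then (if j = i then a else px j) else undefined)"
    have xS: "\<forall>j\<in>I. x j \<in> S j" using px iab by (auto simp: x_def)
    have xX: "x \<in> X" unfolding X_def prod_space_def using xS by (auto simp: x_def I_def)
    have "\<forall>j\<in>I. \<exists>c. c \<in> S j \<and> 0 < Ms j (x j) c"
      using exists_pos Ms xS unfolding trans_mat_def I_def by blast
    then obtain py where py: "\<forall>j\<in>I. py j \<in> S j \<and> 0 < Ms j (x j) (py j)" by (metis bchoice)
    define y where "y = (\<lambda>j. if j \<in> I then (if j = i then b else py j) else undefined)"
    have yS: "\<forall>j\<in>I. y j \<in> S j" using py iab by (auto simp: y_def)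
    have yX: "y \<in> X" unfolding X_def prod_space_def using yS by (auto simp: y_def I_def)
    have "0 < P x" using Ppos[OF xX] px iab by (auto simp: x_def)
    moreover have "0 < TM x y" using TMpos[OF xX yX] py iab by (auto simp: x_def y_def)
    moreover have "TL x y = 0" unfolding TL_def tensor_mat_def I_def[symmetric]
      using iab L0 finI by (auto simp: prod_zero_iff x_def y_def intro!: bexI[of _ i])
    ultimately have "fdiv KL_fun X P TM TL = \<infinity>"
      using finX PX xX yX by (intro KL_infinite[of _ _ x y]) (auto simp: prob_mass_def)
    then show ?thesis using RHS unfolding X_def P_def TM_def TL_def I_def by simp
  qed
qed



lemma fterm_scale:
  assumes "c > 0"
  shows "fterm f (c * a) (c * b) = ereal c * fterm f a b"
  using assms by (auto simp: fterm_def mult.assoc[symmetric])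

lemma fdiv_cong_rows:
  assumes "\<forall>x\<in>\<Omega>. \<pi> x \<noteq> 0 \<longrightarrow> (\<forall>y\<in>\<Omega>. M x y = M' x y \<and> L x y = L' x y)"
  shows "fdiv f \<Omega> \<pi> M L = fdiv f \<Omega> \<pi> M' L'"
  unfolding fdiv_def
proof (rule sum.cong[OF refl])
  fix x assume x: "x \<in> \<Omega>"
  show "ereal (\<pi> x) * (\<Sum>y\<in>\<Omega>. fterm f (M x y) (L x y)) = ereal (\<pi> x) * (\<Sum>y\<in>\<Omega>. fterm f (M' x y) (L' x y))"
  proof (cases "\<pi> x = 0")
    case True then show ?thesis by (simp add: zero_ereal_def[symmetric])
  next
    case False then show ?thesis using assms x by simp
  qed
qed

lemma fdiv_expand:
  assumes f: "convex_on {0..} (f::real\<Rightarrow>real)" and pi: "\<forall>x\<in>\<Omega>. 0 \<le> \<pi> x"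
    and M: "\<forall>x\<in>\<Omega>. \<forall>y\<in>\<Omega>. 0 \<le> M x y"
  shows "fdiv f \<Omega> \<pi> M L = (\<Sum>x\<in>\<Omega>. \<Sum>y\<in>\<Omega>. ereal (\<pi> x) * fterm f (M x y) (L x y))"
  unfolding fdiv_def using pi M
  by (intro sum.cong[OF refl] ereal_sum_distrib_nn) (auto intro!: fterm_not_minf[OF f])

lemma bisect_generic:
  assumes f: "convex_on {0..} (f::real\<Rightarrow>real)" and pi: "\<forall>x\<in>\<Omega>. 0 \<le> \<pi> x"
    and M: "\<forall>x\<in>\<Omega>. \<forall>y\<in>\<Omega>. 0 \<le> M x y"
    and hM: "\<forall>x\<in>\<Omega>. \<forall>y\<in>\<Omega>. \<pi> x = 0 \<longrightarrow> 0 < \<pi> y \<longrightarrow> M y x = 0"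
    and hL: "\<forall>x\<in>\<Omega>. \<forall>y\<in>\<Omega>. \<pi> x = 0 \<longrightarrow> 0 < \<pi> y \<longrightarrow> L y x = 0"
    and L': "\<forall>x\<in>\<Omega>. \<forall>y\<in>\<Omega>. 0 < \<pi> x \<longrightarrow> L' x y = \<pi> y * L y x / \<pi> x"
  shows "fdiv f \<Omega> \<pi> M L = fdiv f \<Omega> \<pi> (time_rev \<pi> M) L'"
proof -
  have Mr: "\<forall>x\<in>\<Omega>. \<forall>y\<in>\<Omega>. 0 \<le> time_rev \<pi> M x y"
    using pi M by (auto simp: time_rev_def)
  have T: "ereal (\<pi> x) * fterm f (time_rev \<pi> M x y) (L' x y) = ereal (\<pi> y) * fterm f (M y x) (L y x)"
    if x: "x \<in> \<Omega>" and y: "y \<in> \<Omega>" for x y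
  proof (cases "\<pi> x = 0")
    case True
    show ?thesis
    proof (cases "\<pi> y = 0")
      case False
      then have "0 < \<pi> y" using pi y by (simp add: less_le)
      then have "M y x = 0" "L y x = 0" using hM hL x y True by auto
      then show ?thesis using True by (simp add: zero_ereal_def[symmetric])
    qed (use True in \<open>simp add: zero_ereal_def[symmetric]\<close>)
  next
    case False
    then have px: "0 < \<pi> x" using pi x by (simp add: less_le)
    have e1: "time_rev \<pi> M x y = (\<pi> y / \<pi> x) * M y x" by (simp add: time_rev_def)
    have e2: "L' x y = (\<pi> y / \<pi> x) * L y x" using L' x y px by simp
    show ?thesis
    proof (cases "\<pi> y = 0")
      case True
      then show ?thesis unfolding e1 e2 by (simp add: zero_ereal_def[symmetric])
    next
      case False
      then have py: "0 < \<pi> y" using pi y by (simp add: less_le)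
      have "ereal (\<pi> x) * fterm f (time_rev \<pi> M x y) (L' x y)
          = ereal (\<pi> x) * (ereal (\<pi> y / \<pi> x) * fterm f (M y x) (L y x))"
        unfolding e1 e2 using px py by (subst fterm_scale) auto
      also have "\<dots> = ereal (\<pi> x * (\<pi> y / \<pi> x)) * fterm f (M y x) (L y x)"
        by (simp add: mult.assoc[symmetric])
      also have "\<pi> x * (\<pi> y / \<pi> x) = \<pi> y" using px by simp
      finally show ?thesis .
    qed
  qed
  have "fdiv f \<Omega> \<pi> (time_rev \<pi> M) L' = (\<Sum>x\<in>\<Omega>. \<Sum>y\<in>\<Omega>. ereal (\<pi> x) * fterm f (time_rev \<pi> M x y) (L' x y))"
    by (rule fdiv_expand[OF f pi Mr])
  also have "\<dots> = (\<Sum>x\<in>\<Omega>. \<Sum>y\<in>\<Omega>. ereal (\<pi> y) * fterm f (M y x) (L y x))"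
    using T by (intro sum.cong[OF refl]) auto
  also have "\<dots> = (\<Sum>y\<in>\<Omega>. \<Sum>x\<in>\<Omega>. ereal (\<pi> y) * fterm f (M y x) (L y x))"
    by (rule sum.swap)
  also have "\<dots> = fdiv f \<Omega> \<pi> M L"
    by (rule fdiv_expand[OF f pi M, symmetric])
  finally show ?thesis ..
qed



lemma rev_stat:
  assumes "trans_mat A L" "reversible A p L"
  shows "stationary A p L"
  unfolding stationary_def
proof
  fix y assume y: "y \<in> A"
  have "(\<Sum>x\<in>A. p x * L x y) = (\<Sum>x\<in>A. p y * L y x)"
    using assms(2) y by (intro sum.cong) (auto simp: reversible_def)
  also have "\<dots> = p y * (\<Sum>x\<in>A. L y x)" by (simp add: sum_distrib_left)
  also have "\<dots> = p y" using assms(1) y by (simp add: trans_mat_def)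
  finally show "(\<Sum>x\<in>A. p x * L x y) = p y" .
qed

lemma stat_zero:
  assumes fin: "finite A" and p: "\<forall>x\<in>A. 0 \<le> p x" and L: "\<forall>x\<in>A. \<forall>y\<in>A. 0 \<le> L x y"
    and st: "stationary A p L" and x: "x \<in> A" "p x = 0" and y: "y \<in> A" "0 < p y"
  shows "L y x = 0"
proof -
  have "(\<Sum>z\<in>A. p z * L z x) = 0" using st x by (simp add: stationary_def)
  then have "\<forall>z\<in>A. p z * L z x = 0" using fin p L x by (subst (asm) sum_nonneg_eq_0_iff) auto
  then have "p y * L y x = 0" using y by auto
  then show ?thesis using y by simp
qed

lemma part5:
  assumes fin: "\<forall>i\<in>{1..d}. finite (S i)"
    and M: "trans_mat (prod_space d S) M"
    and Ls: "\<forall>i\<in>{1..d}. trans_mat (S i) (Ls i)"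
    and f: "convex_on {0..} (f::real\<Rightarrow>real)"
    and ps: "\<forall>i\<in>{1..d}. prob_mass (S i) (\<pi>s i)"
    and stM: "stationary (prod_space d S) (tensor_mass d \<pi>s) M"
  shows "((\<forall>i\<in>{1..d}. stationary (S i) (\<pi>s i) (Ls i)) \<longrightarrow>
          fdiv f (prod_space d S) (tensor_mass d \<pi>s) M (tensor_mat d Ls)
          = fdiv f (prod_space d S) (tensor_mass d \<pi>s) (time_rev (tensor_mass d \<pi>s) M)
              (tensor_mat d (\<lambda>i. time_rev (\<pi>s i) (Ls i))))
     \<and> ((\<forall>i\<in>{1..d}. reversible (S i) (\<pi>s i) (Ls i)) \<longrightarrow>
          fdiv f (prod_space d S) (tensor_mass d \<pi>s) M (tensor_mat d Ls)
          = fdiv f (prod_space d S) (tensor_mass d \<pi>s) (time_rev (tensor_mass d \<pi>s) M) (tensor_mat d Ls))"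
proof -
  define I where "I = {1..d}"
  define X where "X = prod_space d S"
  define P where "P = tensor_mass d \<pi>s"
  have finX: "finite X" unfolding X_def by (rule finite_prod_space[OF fin])
  have finI: "finite I" by (simp add: I_def)
  have PX: "prob_mass X P" unfolding X_def P_def by (rule tensor_prob[OF fin ps])
  have memX: "x j \<in> S j" if "x \<in> X" "j \<in> I" for x j
    using that mem_prod_space unfolding X_def I_def by blast
  have psnn: "0 \<le> \<pi>s j a" if "j \<in> I" "a \<in> S j" for j a
    using ps that by (auto simp: prob_mass_def I_def)
  have Lsnn: "0 \<le> Ls j a b" if "j \<in> I" "a \<in> S j" "b \<in> S j" for j a b
    using Ls that by (auto simp: trans_mat_def I_def)
  have Ppos: "0 < P x \<longleftrightarrow> (\<forall>j\<in>I. 0 < \<pi>s j (x j))" if "x \<in> X" for x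
    unfolding P_def tensor_mass_def I_def[symmetric]
    using that finI memX psnn by (intro prod_pos_iff_nn) auto
  have Pnn: "\<forall>x\<in>X. 0 \<le> P x" using PX by (simp add: prob_mass_def)
  have Mnn: "\<forall>x\<in>X. \<forall>y\<in>X. 0 \<le> M x y" using M by (simp add: trans_mat_def X_def)
  have A: "fdiv f X P M (tensor_mat d Ls) = fdiv f X P (time_rev P M) (tensor_mat d (\<lambda>i. time_rev (\<pi>s i) (Ls i)))"
    if stL: "\<forall>i\<in>{1..d}. stationary (S i) (\<pi>s i) (Ls i)"
  proof (rule bisect_generic[OF f Pnn Mnn])
    show "\<forall>x\<in>X. \<forall>y\<in>X. P x = 0 \<longrightarrow> 0 < P y \<longrightarrow> M y x = 0"
      using stat_zero[OF finX Pnn Mnn] stM unfolding X_def P_def by blast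
    show "\<forall>x\<in>X. \<forall>y\<in>X. P x = 0 \<longrightarrow> 0 < P y \<longrightarrow> tensor_mat d Ls y x = 0"
    proof (intro ballI impI)
      fix x y assume x: "x \<in> X" and y: "y \<in> X" and px: "P x = 0" and py: "0 < P y"
      obtain i where i: "i \<in> I" "\<pi>s i (x i) = 0"
        using px finI unfolding P_def tensor_mass_def I_def[symmetric] by (auto simp: prod_zero_iff)
      have "0 < \<pi>s i (y i)" using Ppos[OF y] py i by auto
      then have "Ls i (y i) (x i) = 0"
        using stat_zero[of "S i" "\<pi>s i" "Ls i" "x i" "y i"] fin stL i memX x y psnn Lsnn
        by (auto simp: I_def)
      then show "tensor_mat d Ls y x = 0"
        unfolding tensor_mat_def I_def[symmetric] using finI i by (auto simp: prod_zero_iff)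
    qed
    show "\<forall>x\<in>X. \<forall>y\<in>X. 0 < P x \<longrightarrow>
        tensor_mat d (\<lambda>i. time_rev (\<pi>s i) (Ls i)) x y = P y * tensor_mat d Ls y x / P x"
      unfolding tensor_mat_def P_def tensor_mass_def time_rev_def
      by (simp add: prod_dividef prod.distrib)
  qed
  show ?thesis
  proof (intro conjI impI)
    assume "\<forall>i\<in>{1..d}. stationary (S i) (\<pi>s i) (Ls i)"
    then show "fdiv f (prod_space d S) (tensor_mass d \<pi>s) M (tensor_mat d Ls)
          = fdiv f (prod_space d S) (tensor_mass d \<pi>s) (time_rev (tensor_mass d \<pi>s) M)
              (tensor_mat d (\<lambda>i. time_rev (\<pi>s i) (Ls i)))"
      using A unfolding X_def P_def by blast
  next
    assume rv: "\<forall>i\<in>{1..d}. reversible (S i) (\<pi>s i) (Ls i)"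
    then have "\<forall>i\<in>{1..d}. stationary (S i) (\<pi>s i) (Ls i)" using Ls rev_stat by blast
    then have A': "fdiv f X P M (tensor_mat d Ls) = fdiv f X P (time_rev P M) (tensor_mat d (\<lambda>i. time_rev (\<pi>s i) (Ls i)))"
      by (rule A)
    also have "\<dots> = fdiv f X P (time_rev P M) (tensor_mat d Ls)"
    proof (rule fdiv_cong_rows, intro ballI impI conjI refl)
      fix x y assume x: "x \<in> X" and px: "P x \<noteq> 0" and y: "y \<in> X"
      then have pos: "\<forall>j\<in>I. 0 < \<pi>s j (x j)" using Ppos[OF x] Pnn x by (auto simp: less_le)
      show "tensor_mat d (\<lambda>i. time_rev (\<pi>s i) (Ls i)) x y = tensor_mat d Ls x y"
        unfolding tensor_mat_def I_def[symmetric]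
      proof (rule prod.cong[OF refl])
        fix j assume j: "j \<in> I"
        have "\<pi>s j (x j) * Ls j (x j) (y j) = \<pi>s j (y j) * Ls j (y j) (x j)"
          using rv j memX x y unfolding reversible_def I_def by blast
        then show "time_rev (\<pi>s j) (Ls j) (x j) (y j) = Ls j (x j) (y j)"
          using pos j unfolding time_rev_def by (metis less_irrefl nonzero_mult_div_cancel_left)
      qed
    qed
    finally show "fdiv f (prod_space d S) (tensor_mass d \<pi>s) M (tensor_mat d Ls)
          = fdiv f (prod_space d S) (tensor_mass d \<pi>s) (time_rev (tensor_mass d \<pi>s) M) (tensor_mat d Ls)"
      unfolding X_def P_def .
  qed
qed


theorem proposition2p3:
  fixes d :: nat
    and S :: "nat \<Rightarrow> 'a set"
    and \<pi> :: "(nat \<Rightarrow> 'a) \<Rightarrow> real"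
    and M :: "(nat \<Rightarrow> 'a) \<Rightarrow> (nat \<Rightarrow> 'a) \<Rightarrow> real"
    and Ms Ls :: "nat \<Rightarrow> 'a \<Rightarrow> 'a \<Rightarrow> real"
    and f :: "real \<Rightarrow> real"
  assumes d_pos: "1 \<le> d"
    and fin: "\<forall>i\<in>{1..d}. finite (S i)"
    and pi: "prob_mass (prod_space d S) \<pi>"
    and M: "trans_mat (prod_space d S) M"
    and Ms: "\<forall>i\<in>{1..d}. trans_mat (S i) (Ms i)"
    and Ls: "\<forall>i\<in>{1..d}. trans_mat (S i) (Ls i)"
    and f_conv: "convex_on {0..} f"
    and f1: "f 1 = 0"
  shows
    "(fdiv f (prod_space d S) \<pi> M (tensor_mat d Ls) \<ge> 0 \<and>
      ((\<forall>x\<in>prod_space d S. \<pi> x > 0) \<and> strictly_convex_at_1 f \<longrightarrow>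
         (fdiv f (prod_space d S) \<pi> M (tensor_mat d Ls) = 0 \<longleftrightarrow>
          (\<forall>x\<in>prod_space d S. \<forall>y\<in>prod_space d S. M x y = tensor_mat d Ls x y))))
   \<and>
    (\<forall>M1 M2 t. trans_mat (prod_space d S) M1 \<and> trans_mat (prod_space d S) M2 \<and>
        0 \<le> t \<and> t \<le> 1 \<longrightarrow>
        fdiv f (prod_space d S) \<pi> (\<lambda>x y. t * M1 x y + (1 - t) * M2 x y) (tensor_mat d Ls)
        \<le> ereal t * fdiv f (prod_space d S) \<pi> M1 (tensor_mat d Ls)
           + ereal (1 - t) * fdiv f (prod_space d S) \<pi> M2 (tensor_mat d Ls))
   \<and>
    (\<forall>\<pi>s. (\<forall>i\<in>{1..d}. prob_mass (S i) (\<pi>s i)) \<longrightarrow>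
       fdiv KL_fun (prod_space d S) (tensor_mass d \<pi>s) (tensor_mat d Ms) (tensor_mat d Ls)
       = (\<Sum>i\<in>{1..d}. fdiv KL_fun (S i) (\<pi>s i) (Ms i) (Ls i)))
   \<and>
    (\<forall>\<pi>s. (\<forall>i\<in>{1..d}. prob_mass (S i) (\<pi>s i)) \<longrightarrow>
       Max ((\<lambda>i. fdiv hellinger_fun (S i) (\<pi>s i) (Ms i) (Ls i)) ` {1..d})
         \<le> fdiv hellinger_fun (prod_space d S) (tensor_mass d \<pi>s) (tensor_mat d Ms) (tensor_mat d Ls)
       \<and> fdiv hellinger_fun (prod_space d S) (tensor_mass d \<pi>s) (tensor_mat d Ms) (tensor_mat d Ls)
         \<le> (\<Sum>i\<in>{1..d}. fdiv hellinger_fun (S i) (\<pi>s i) (Ms i) (Ls i)))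
   \<and>
    (\<forall>\<pi>s. (\<forall>i\<in>{1..d}. prob_mass (S i) (\<pi>s i)) \<and> \<pi> = tensor_mass d \<pi>s
        \<and> stationary (prod_space d S) \<pi> M \<longrightarrow>
       ((\<forall>i\<in>{1..d}. stationary (S i) (\<pi>s i) (Ls i)) \<longrightarrow>
          fdiv f (prod_space d S) \<pi> M (tensor_mat d Ls)
          = fdiv f (prod_space d S) \<pi> (time_rev \<pi> M) (tensor_mat d (\<lambda>i. time_rev (\<pi>s i) (Ls i))))
     \<and> ((\<forall>i\<in>{1..d}. reversible (S i) (\<pi>s i) (Ls i)) \<longrightarrow>
          fdiv f (prod_space d S) \<pi> M (tensor_mat d Ls)
          = fdiv f (prod_space d S) \<pi> (time_rev \<pi> M) (tensor_mat d Ls)))"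
  proof -
  have finX: "finite (prod_space d S)" by (rule finite_prod_space[OF fin])
  have pinn: "\<forall>x\<in>prod_space d S. 0 \<le> \<pi> x" using pi by (simp add: prob_mass_def)
  have TL: "trans_mat (prod_space d S) (tensor_mat d Ls)" by (rule tensor_trans[OF fin Ls])
  have TLnn: "\<forall>x\<in>prod_space d S. \<forall>y\<in>prod_space d S. 0 \<le> tensor_mat d Ls x y"
    using TL by (simp add: trans_mat_def)
  have P1: "fdiv f (prod_space d S) \<pi> M (tensor_mat d Ls) \<ge> 0"
    by (rule fdiv_nonneg[OF f_conv f1 finX pinn M TL])
  have P1b: "(\<forall>x\<in>prod_space d S. \<pi> x > 0) \<and> strictly_convex_at_1 f \<longrightarrow>
         (fdiv f (prod_space d S) \<pi> M (tensor_mat d Ls) = 0 \<longleftrightarrow>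
          (\<forall>x\<in>prod_space d S. \<forall>y\<in>prod_space d S. M x y = tensor_mat d Ls x y))"
    using fdiv_eq0_iff[OF f_conv f1 finX _ M TL] by blast
  have P2: "\<forall>M1 M2 t. trans_mat (prod_space d S) M1 \<and> trans_mat (prod_space d S) M2 \<and>
        0 \<le> t \<and> t \<le> 1 \<longrightarrow>
        fdiv f (prod_space d S) \<pi> (\<lambda>x y. t * M1 x y + (1 - t) * M2 x y) (tensor_mat d Ls)
        \<le> ereal t * fdiv f (prod_space d S) \<pi> M1 (tensor_mat d Ls)
           + ereal (1 - t) * fdiv f (prod_space d S) \<pi> M2 (tensor_mat d Ls)"
    using fdiv_convex[OF f_conv finX pinn _ _ TLnn] by blast
  have P3: "\<forall>\<pi>s. (\<forall>i\<in>{1..d}. prob_mass (S i) (\<pi>s i)) \<longrightarrow>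
       fdiv KL_fun (prod_space d S) (tensor_mass d \<pi>s) (tensor_mat d Ms) (tensor_mat d Ls)
       = (\<Sum>i\<in>{1..d}. fdiv KL_fun (S i) (\<pi>s i) (Ms i) (Ls i))"
    using part3[OF fin Ms Ls] by blast
  have P4: "\<forall>\<pi>s. (\<forall>i\<in>{1..d}. prob_mass (S i) (\<pi>s i)) \<longrightarrow>
       Max ((\<lambda>i. fdiv hellinger_fun (S i) (\<pi>s i) (Ms i) (Ls i)) ` {1..d})
         \<le> fdiv hellinger_fun (prod_space d S) (tensor_mass d \<pi>s) (tensor_mat d Ms) (tensor_mat d Ls)
       \<and> fdiv hellinger_fun (prod_space d S) (tensor_mass d \<pi>s) (tensor_mat d Ms) (tensor_mat d Ls)
         \<le> (\<Sum>i\<in>{1..d}. fdiv hellinger_fun (S i) (\<pi>s i) (Ms i) (Ls i))"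
    using part4[OF d_pos fin Ms Ls] by blast
  have P5: "\<forall>\<pi>s. (\<forall>i\<in>{1..d}. prob_mass (S i) (\<pi>s i)) \<and> \<pi> = tensor_mass d \<pi>s
        \<and> stationary (prod_space d S) \<pi> M \<longrightarrow>
       ((\<forall>i\<in>{1..d}. stationary (S i) (\<pi>s i) (Ls i)) \<longrightarrow>
          fdiv f (prod_space d S) \<pi> M (tensor_mat d Ls)
          = fdiv f (prod_space d S) \<pi> (time_rev \<pi> M) (tensor_mat d (\<lambda>i. time_rev (\<pi>s i) (Ls i))))
     \<and> ((\<forall>i\<in>{1..d}. reversible (S i) (\<pi>s i) (Ls i)) \<longrightarrow>
          fdiv f (prod_space d S) \<pi> M (tensor_mat d Ls)
          = fdiv f (prod_space d S) \<pi> (time_rev \<pi> M) (tensor_mat d Ls))"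
  proof (intro allI impI)
    fix \<pi>s assume h: "(\<forall>i\<in>{1..d}. prob_mass (S i) (\<pi>s i)) \<and> \<pi> = tensor_mass d \<pi>s
        \<and> stationary (prod_space d S) \<pi> M"
    then have e: "\<pi> = tensor_mass d \<pi>s" by blast
    show "((\<forall>i\<in>{1..d}. stationary (S i) (\<pi>s i) (Ls i)) \<longrightarrow>
          fdiv f (prod_space d S) \<pi> M (tensor_mat d Ls)
          = fdiv f (prod_space d S) \<pi> (time_rev \<pi> M) (tensor_mat d (\<lambda>i. time_rev (\<pi>s i) (Ls i))))
     \<and> ((\<forall>i\<in>{1..d}. reversible (S i) (\<pi>s i) (Ls i)) \<longrightarrow>
          fdiv f (prod_space d S) \<pi> M (tensor_mat d Ls)
          = fdiv f (prod_space d S) \<pi> (time_rev \<pi> M) (tensor_mat d Ls))"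
      unfolding e using part5[OF fin M Ls f_conv, of \<pi>s] h e by blast
  qed
  show ?thesis using P1 P1b P2 P3 P4 P5 by blast
qed

end
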